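(* Let $h$ be a left-invariant metric with matrix $\Phi$ with respect to $h_0$, let $\lambda>0$, and let $\Theta=\lambda^{-1}\Phi$ be the matrix of $h$ with respect to the bi-invariant metric $\lambda h_0$. Put $\Psi=I-\Phi^{-1}$ and $\Upsilon=I-\Theta^{-1}$. Fix $X,Y\in\mathfrak g$ and let $\kappa^\Psi$ be the curvature function of the path $\Phi_t=(I-t\Psi)^{-1}$ (relative to $h_0$) and $\kappa^\Upsilon$ that of the path $\Theta_t=(I-t\Upsilon)^{-1}$ (relative to $\lambda h_0$). Then for all $0\le t\le1$, $$\kappa^\Upsilon(t)=\lambda\,(1-(1-\lambda)t)^3\,\kappa^\Psi\!\left(\frac{\lambda t}{1-(1-\lambda)t}\right).$$
   Context: $G$ is a compact Lie group with Lie algebra $\mathfrak g$ and bi-invariant metric $h_0$. For a bi-invariant metric $b$ and left-invariant metric $h$, the matrix of $h$ with respect to $b$ is the $b$-self-adjoint positive definite $\Phi$ with $h(X,Y)=b(\Phi X,Y)$ on $\mathfrak g$. For a $b$-self-adjoint $\Psi$, the inverse-linear path $\Phi_t=(I-t\Psi)^{-1}$ (relative to $b$) determines left-invariant metrics $h_t(X,Y)=b(\Phi_tX,Y)$. The unnormalized sectional curvature is $k_h(Z_1,Z_2)=h(R_h(Z_1,Z_2)Z_2,Z_1)$, and for fixed $X,Y$ the curvature function is $\kappa^\Psi(t)=k_{h_t}(\Phi_t^{-1}X,\Phi_t^{-1}Y)$. *)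

theory Defs
  imports "HOL-Analysis.Analysis"
begin

text \<open>Lie algebra g of G modelled as a finite-dimensional real vector space 'v with bracket br.
 Left-invariant metrics are inner products h on g; on left-invariant fields the Levi-Civita
 connection is determined by the Koszul formula
 2 h(nabla_X Y, Z) = h([X,Y],Z) - h([Y,Z],X) + h([Z,X],Y).\<close>

definition lie_algebra :: "('v::euclidean_space \<Rightarrow> 'v \<Rightarrow> 'v) \<Rightarrow> bool" where
  "lie_algebra br \<longleftrightarrow> bilinear br \<and> (\<forall>X Y. br X Y = - br Y X) \<and>
     (\<forall>X Y Z. br X (br Y Z) + br Y (br Z X) + br Z (br X Y) = 0)"

definition inner_prod :: "('v::euclidean_space \<Rightarrow> 'v \<Rightarrow> real) \<Rightarrow> bool" where
  "inner_prod h \<longleftrightarrow> bilinear h \<and> (\<forall>X Y. h X Y = h Y X) \<and> (\<forall>X. X \<noteq> 0 \<longrightarrow> h X X > 0)"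

definition bi_invariant :: "('v::euclidean_space \<Rightarrow> 'v \<Rightarrow> 'v) \<Rightarrow> ('v \<Rightarrow> 'v \<Rightarrow> real) \<Rightarrow> bool" where
  "bi_invariant br b \<longleftrightarrow> inner_prod b \<and> (\<forall>X Y Z. b (br X Y) Z + b Y (br X Z) = 0)"

definition metric_of :: "('v \<Rightarrow> 'v \<Rightarrow> real) \<Rightarrow> ('v \<Rightarrow> 'v) \<Rightarrow> 'v \<Rightarrow> 'v \<Rightarrow> real" where
  "metric_of b Phi X Y = b (Phi X) Y"

definition lc_conn :: "('v::euclidean_space \<Rightarrow> 'v \<Rightarrow> 'v) \<Rightarrow> ('v \<Rightarrow> 'v \<Rightarrow> real) \<Rightarrow> 'v \<Rightarrow> 'v \<Rightarrow> 'v" where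
  "lc_conn br h X Y = (THE U. \<forall>Z. h U Z = (h (br X Y) Z - h (br Y Z) X + h (br Z X) Y) / 2)"

definition curv :: "('v::euclidean_space \<Rightarrow> 'v \<Rightarrow> 'v) \<Rightarrow> ('v \<Rightarrow> 'v \<Rightarrow> real) \<Rightarrow> 'v \<Rightarrow> 'v \<Rightarrow> 'v \<Rightarrow> 'v" where
  "curv br h X Y Z = lc_conn br h X (lc_conn br h Y Z) - lc_conn br h Y (lc_conn br h X Z)
      - lc_conn br h (br X Y) Z"

definition sec_k :: "('v::euclidean_space \<Rightarrow> 'v \<Rightarrow> 'v) \<Rightarrow> ('v \<Rightarrow> 'v \<Rightarrow> real) \<Rightarrow> 'v \<Rightarrow> 'v \<Rightarrow> real" where
  "sec_k br h Z1 Z2 = h (curv br h Z1 Z2 Z2) Z1"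

definition inv_lin_path :: "('v::euclidean_space \<Rightarrow> 'v) \<Rightarrow> real \<Rightarrow> 'v \<Rightarrow> 'v" where
  "inv_lin_path Psi t = inv (\<lambda>x. x - t *\<^sub>R Psi x)"

definition curv_fun :: "('v::euclidean_space \<Rightarrow> 'v \<Rightarrow> 'v) \<Rightarrow> ('v \<Rightarrow> 'v \<Rightarrow> real) \<Rightarrow> ('v \<Rightarrow> 'v)
     \<Rightarrow> 'v \<Rightarrow> 'v \<Rightarrow> real \<Rightarrow> real" where
  "curv_fun br b Psi X Y t =
     sec_k br (metric_of b (inv_lin_path Psi t))
       (inv (inv_lin_path Psi t) X) (inv (inv_lin_path Psi t) Y)"

end

theory Submission imports Defs begin

lemma lin_inv:
  fixes f :: "'a::euclidean_space \<Rightarrow> 'a"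
  assumes "linear f" "bij f" shows "linear (inv f)"
proof (rule linearI)
  have i: "inj f" and s: "surj f" using assms(2) bij_is_inj bij_is_surj by auto
  fix x y :: 'a and c :: real
  show "inv f (x + y) = inv f x + inv f y"
    by (rule inv_f_eq[OF i]) (simp add: linear_add[OF assms(1)] surj_f_inv_f[OF s])
  show "inv f (c *\<^sub>R x) = c *\<^sub>R inv f x"
    by (rule inv_f_eq[OF i]) (simp add: linear_scale[OF assms(1)] surj_f_inv_f[OF s])
qed

lemma lin_pos_bij:
  fixes f :: "'a::euclidean_space \<Rightarrow> 'a"
    and h :: "'a \<Rightarrow> 'a \<Rightarrow> real"
  assumes "linear f" "bilinear h" "\<forall>U. U \<noteq> 0 \<longrightarrow> h (f U) U > 0" shows "bij f"
proof -
  have "inj f" unfolding linear_injective_0[OF assms(1)]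
  proof (intro allI impI)
    fix x assume "f x = 0"
    hence "h (f x) x = 0" using bilinear_lzero[OF assms(2)] by simp
    show "x = 0"
    proof (rule ccontr)
      assume "x \<noteq> 0" hence "h (f x) x > 0" using assms(3) by blast
      thus False using \<open>h (f x) x = 0\<close> by simp
    qed
  qed
  moreover have "surj f" using linear_injective_imp_surjective[OF assms(1) calculation] by blast
  ultimately show ?thesis by (simp add: bij_def)
qed

lemma riesz_ex:
  fixes h :: "'a::euclidean_space \<Rightarrow> 'a \<Rightarrow> real"
  assumes hb: "bilinear h" and hp: "\<forall>U. U \<noteq> 0 \<longrightarrow> h U U > 0" and lf: "linear f"
  shows "\<exists>U. \<forall>Z. h U Z = f Z"
proof -
  define M where "M U = (\<Sum>b\<in>Basis. h U b *\<^sub>R b)" for U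
  have hl: "linear (\<lambda>U. h U b)" for b using hb by (simp add: bilinear_def)
  have hr: "linear (\<lambda>Z. h U Z)" for U using hb by (simp add: bilinear_def)
  have lM: "linear M" unfolding M_def
  proof (intro linear_compose_sum ballI)
    fix b :: 'a show "linear (\<lambda>U. h U b *\<^sub>R b)"
      by (rule linearI) (simp_all add: linear_add[OF hl] linear_scale[OF hl] scaleR_add_left)
  qed
  have hM: "h U Z = M U \<bullet> Z" for U Z
  proof -
    have "h U Z = h U (\<Sum>b\<in>Basis. (Z \<bullet> b) *\<^sub>R b)" by (simp add: euclidean_representation)
    also have "\<dots> = (\<Sum>b\<in>Basis. (Z \<bullet> b) * h U b)"
      by (simp add: linear_sum[OF hr] linear_scale[OF hr])
    also have "\<dots> = M U \<bullet> Z" unfolding M_def by (simp add: inner_sum_right inner_commute mult.commute)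
    finally show ?thesis .
  qed
  have "inj M" unfolding linear_injective_0[OF lM]
    using hp hM by (metis inner_zero_left less_irrefl)
  hence sM: "surj M" using linear_injective_imp_surjective[OF lM] by blast
  define w where "w = (\<Sum>b\<in>Basis. f b *\<^sub>R b)"
  have fw: "f Z = w \<bullet> Z" for Z
  proof -
    have "f Z = f (\<Sum>b\<in>Basis. (Z \<bullet> b) *\<^sub>R b)" by (simp add: euclidean_representation)
    also have "\<dots> = (\<Sum>b\<in>Basis. (Z \<bullet> b) * f b)"
      by (simp add: linear_sum[OF lf] linear_scale[OF lf])
    also have "\<dots> = w \<bullet> Z" unfolding w_def by (simp add: inner_sum_right inner_commute mult.commute)
    finally show ?thesis .
  qed
  obtain U where "M U = w" using sM by (metis surjD)
  thus ?thesis using hM fw by auto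
qed

lemma riesz_uniq:
  fixes h :: "'a::euclidean_space \<Rightarrow> 'a \<Rightarrow> real"
  assumes hb: "bilinear h" and hp: "\<forall>U. U \<noteq> 0 \<longrightarrow> h U U > 0"
    and "\<forall>Z. h U Z = f Z" "\<forall>Z. h V Z = f Z" shows "U = V"
proof -
  have "h (U - V) (U - V) = 0" using assms(3,4) by (simp add: bilinear_lsub[OF hb])
  thus ?thesis using hp by (metis less_irrefl eq_iff_diff_eq_0)
qed


lemma lc_spec:
  fixes h :: "'a::euclidean_space \<Rightarrow> 'a \<Rightarrow> real"
  assumes bb: "bilinear br" and hb: "bilinear h" and hp: "\<forall>U. U \<noteq> 0 \<longrightarrow> h U U > 0"
  shows "\<exists>!U. \<forall>Z. h U Z = (h (br X Y) Z - h (br Y Z) X + h (br Z X) Y) / 2"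
proof -
  have hl: "linear (\<lambda>U. h U b)" for b using hb by (simp add: bilinear_def)
  have hr: "linear (\<lambda>Z. h U Z)" for U using hb by (simp add: bilinear_def)
  have bl: "linear (\<lambda>U. br U b)" for b using bb by (simp add: bilinear_def)
  have brr: "linear (\<lambda>Z. br U Z)" for U using bb by (simp add: bilinear_def)
  have lf: "linear (\<lambda>Z. (h (br X Y) Z - h (br Y Z) X + h (br Z X) Y) / 2)"
  proof (rule linearI)
    fix x y :: 'a and r :: real
    show "(h (br X Y) (x + y) - h (br Y (x + y)) X + h (br (x + y) X) Y) / 2 =
      (h (br X Y) x - h (br Y x) X + h (br x X) Y) / 2 + (h (br X Y) y - h (br Y y) X + h (br y X) Y) / 2"
      by (simp only: linear_add[OF hr] linear_add[OF hl] linear_add[OF bl] linear_add[OF brr]) argo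
    show "(h (br X Y) (r *\<^sub>R x) - h (br Y (r *\<^sub>R x)) X + h (br (r *\<^sub>R x) X) Y) / 2 =
      r *\<^sub>R ((h (br X Y) x - h (br Y x) X + h (br x X) Y) / 2)"
      by (simp only: linear_scale[OF hr] linear_scale[OF hl] linear_scale[OF bl] linear_scale[OF brr]
        real_scaleR_def) argo
  qed
  obtain U where U: "\<forall>Z. h U Z = (h (br X Y) Z - h (br Y Z) X + h (br Z X) Y) / 2"
    using riesz_ex[OF hb hp lf] by blast
  show ?thesis
  proof (rule ex1I[of _ U])
    show "\<forall>Z. h U Z = (h (br X Y) Z - h (br Y Z) X + h (br Z X) Y) / 2" by (rule U)
    fix V assume V: "\<forall>Z. h V Z = (h (br X Y) Z - h (br Y Z) X + h (br Z X) Y) / 2"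
    show "V = U" by (rule riesz_uniq[OF hb hp V U])
  qed
qed

lemma lc_eqI:
  fixes h :: "'a::euclidean_space \<Rightarrow> 'a \<Rightarrow> real"
  assumes bb: "bilinear br" and hb: "bilinear h" and hp: "\<forall>U. U \<noteq> 0 \<longrightarrow> h U U > 0"
    and P: "\<forall>Z. h U Z = (h (br X Y) Z - h (br Y Z) X + h (br Z X) Y) / 2"
  shows "lc_conn br h X Y = U"
  unfolding lc_conn_def by (rule the1_equality[OF lc_spec[OF bb hb hp] P])

lemma lc_scale:
  fixes h :: "'a::euclidean_space \<Rightarrow> 'a \<Rightarrow> real"
  assumes bb: "bilinear br" and hb: "bilinear h" and hp: "\<forall>U. U \<noteq> 0 \<longrightarrow> h U U > 0"
  shows "lc_conn br h (a *\<^sub>R X) (b *\<^sub>R Y) = (a * b) *\<^sub>R lc_conn br h X Y"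
proof -
  let ?U = "lc_conn br h X Y"
  have U: "\<forall>Z. h ?U Z = (h (br X Y) Z - h (br Y Z) X + h (br Z X) Y) / 2"
    unfolding lc_conn_def by (rule theI'[OF lc_spec[OF bb hb hp, where X=X and Y=Y]])
  have new: "\<forall>Z. h ((a * b) *\<^sub>R ?U) Z = (h (br (a *\<^sub>R X) (b *\<^sub>R Y)) Z - h (br (b *\<^sub>R Y) Z) (a *\<^sub>R X)
        + h (br Z (a *\<^sub>R X)) (b *\<^sub>R Y)) / 2"
  proof
    fix Z
    have "h ((a * b) *\<^sub>R ?U) Z = (a * b) * h ?U Z" by (simp add: bilinear_lmul[OF hb])
    also have "\<dots> = (a * b) * ((h (br X Y) Z - h (br Y Z) X + h (br Z X) Y) / 2)"
      by (simp only: U[rule_format])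
    also have "\<dots> = (h (br (a *\<^sub>R X) (b *\<^sub>R Y)) Z - h (br (b *\<^sub>R Y) Z) (a *\<^sub>R X)
        + h (br Z (a *\<^sub>R X)) (b *\<^sub>R Y)) / 2"
    proof -
      have e1: "h (br (a *\<^sub>R X) (b *\<^sub>R Y)) Z = (a * b) * h (br X Y) Z"
        by (simp add: bilinear_lmul[OF bb] bilinear_rmul[OF bb] bilinear_lmul[OF hb])
      have e2: "h (br (b *\<^sub>R Y) Z) (a *\<^sub>R X) = (a * b) * h (br Y Z) X"
        by (simp add: bilinear_lmul[OF bb] bilinear_lmul[OF hb] bilinear_rmul[OF hb])
      have e3: "h (br Z (a *\<^sub>R X)) (b *\<^sub>R Y) = (a * b) * h (br Z X) Y"
        by (simp add: bilinear_rmul[OF bb] bilinear_lmul[OF hb] bilinear_rmul[OF hb])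
      show ?thesis unfolding e1 e2 e3 by (simp add: field_simps)
    qed
    finally show "h ((a * b) *\<^sub>R ?U) Z = (h (br (a *\<^sub>R X) (b *\<^sub>R Y)) Z - h (br (b *\<^sub>R Y) Z) (a *\<^sub>R X)
        + h (br Z (a *\<^sub>R X)) (b *\<^sub>R Y)) / 2" .
  qed
  show ?thesis by (rule lc_eqI[OF bb hb hp new])
qed

lemma lc_mult:
  fixes h :: "'a::euclidean_space \<Rightarrow> 'a \<Rightarrow> real"
  assumes "mu \<noteq> 0"
  shows "lc_conn br (\<lambda>U V. mu * h U V) = lc_conn br h"
proof (intro ext)
  fix X Y
  have "(\<forall>Z. mu * h U Z = (mu * h (br X Y) Z - mu * h (br Y Z) X + mu * h (br Z X) Y) / 2)
     = (\<forall>Z. h U Z = (h (br X Y) Z - h (br Y Z) X + h (br Z X) Y) / 2)" for U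
  proof -
    have e: "(mu * hu = (mu * A - mu * B + mu * C) / 2) = (hu = (A - B + C) / 2)" for hu A B C :: real
    proof -
      have eq: "(mu * A - mu * B + mu * C) / 2 = mu * ((A - B + C) / 2)" by (simp add: algebra_simps)
      show ?thesis unfolding eq using assms by simp
    qed
    show ?thesis by (simp only: e)
  qed
  thus "lc_conn br (\<lambda>U V. mu * h U V) X Y = lc_conn br h X Y"
    unfolding lc_conn_def by simp
qed

lemma sec_scale:
  fixes h :: "'a::euclidean_space \<Rightarrow> 'a \<Rightarrow> real"
  assumes bb: "bilinear br" and hb: "bilinear h" and hp: "\<forall>U. U \<noteq> 0 \<longrightarrow> h U U > 0"
    and mu: "mu \<noteq> 0"
  shows "sec_k br (\<lambda>U V. mu * h U V) (c *\<^sub>R Z1) (c *\<^sub>R Z2) = mu * c ^ 4 * sec_k br h Z1 Z2"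
proof -
  note ls = lc_scale[OF bb hb hp]
  have cm: "curv br (\<lambda>U V. mu * h U V) = curv br h"
    unfolding curv_def[abs_def] lc_mult[OF mu] ..
  have a: "lc_conn br h (c *\<^sub>R Z2) (c *\<^sub>R Z2) = (c * c) *\<^sub>R lc_conn br h Z2 Z2" by (rule ls)
  have b: "lc_conn br h (c *\<^sub>R Z1) (c *\<^sub>R Z2) = (c * c) *\<^sub>R lc_conn br h Z1 Z2" by (rule ls)
  have d: "br (c *\<^sub>R Z1) (c *\<^sub>R Z2) = (c * c) *\<^sub>R br Z1 Z2"
    by (simp add: bilinear_lmul[OF bb] bilinear_rmul[OF bb])
  have "curv br h (c *\<^sub>R Z1) (c *\<^sub>R Z2) (c *\<^sub>R Z2) = (c * c * c) *\<^sub>R curv br h Z1 Z2 Z2"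
    unfolding curv_def a b d ls by (simp add: algebra_simps)
  thus ?thesis unfolding sec_k_def cm
    by (simp add: bilinear_lmul[OF hb] bilinear_rmul[OF hb] power4_eq_xxxx)
qed


theorem mainTheorem13:
  fixes br :: "'v::euclidean_space \<Rightarrow> 'v \<Rightarrow> 'v"
    and h0 :: "'v \<Rightarrow> 'v \<Rightarrow> real"
    and Phi Theta Psi Upsilon :: "'v \<Rightarrow> 'v"
    and lam t :: real and X Y :: 'v
  assumes "lie_algebra br"
    and "bi_invariant br h0"
    and "linear Phi"
    and "\<forall>U V. h0 (Phi U) V = h0 U (Phi V)"
    and "\<forall>U. U \<noteq> 0 \<longrightarrow> h0 (Phi U) U > 0"
    and "lam > 0"
    and "Theta = (\<lambda>U. (1 / lam) *\<^sub>R Phi U)"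
    and "Psi = (\<lambda>U. U - inv Phi U)"
    and "Upsilon = (\<lambda>U. U - inv Theta U)"
    and "0 \<le> t" and "t \<le> 1"
  shows "curv_fun br (\<lambda>U V. lam * h0 U V) Upsilon X Y t =
    lam * (1 - (1 - lam) * t) ^ 3 *
      curv_fun br h0 Psi X Y (lam * t / (1 - (1 - lam) * t))"
proof -
  note lPhi = assms(3) and sa = assms(4) and pos = assms(5) and lam = assms(6)
  have bb: "bilinear br" using assms(1) by (simp add: lie_algebra_def)
  have h0b: "bilinear h0" and h0p: "\<forall>U. U \<noteq> 0 \<longrightarrow> h0 U U > 0"
    using assms(2) by (auto simp: bi_invariant_def inner_prod_def)
  have bPhi: "bij Phi" by (rule lin_pos_bij[OF lPhi h0b pos])
  define Pi where "Pi = inv Phi"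
  have lPi: "linear Pi" unfolding Pi_def by (rule lin_inv[OF lPhi bPhi])
  have PhiPi: "Phi (Pi U) = U" for U unfolding Pi_def by (rule surj_f_inv_f[OF bij_is_surj[OF bPhi]])
  have PiPhi: "Pi (Phi U) = U" for U unfolding Pi_def by (rule inv_f_f[OF bij_is_inj[OF bPhi]])
  have saPi: "h0 (Pi U) V = h0 U (Pi V)" for U V
  proof -
    have "h0 (Pi U) V = h0 (Pi U) (Phi (Pi V))" by (simp only: PhiPi)
    also have "\<dots> = h0 (Phi (Pi U)) (Pi V)" using sa by simp
    finally show ?thesis by (simp only: PhiPi)
  qed
  have posPi: "h0 (Pi U) U > 0" if "U \<noteq> 0" for U
  proof -
    have "Pi U \<noteq> 0"
    proof
      assume "Pi U = 0" hence "Phi (Pi U) = 0" using linear_0[OF lPhi] by simp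
      thus False using that PhiPi by simp
    qed
    hence "h0 (Phi (Pi U)) (Pi U) > 0" using pos by blast
    thus ?thesis unfolding PhiPi saPi .
  qed
  define c where "c = 1 - (1 - lam) * t"
  define s where "s = lam * t / (1 - (1 - lam) * t)"
  have ceq: "c = (1 - t) + lam * t" by (simp add: c_def algebra_simps)
  have sc: "s = lam * t / c" by (simp add: s_def c_def)
  have lt0: "lam * t \<ge> 0" using lam assms(10) by simp
  have c0: "c > 0"
  proof (cases "t = 0")
    case True thus ?thesis by (simp add: ceq)
  next
    case False hence "lam * t > 0" using lam assms(10) by simp
    thus ?thesis using ceq assms(11) by linarith
  qed
  have s0: "0 \<le> s" unfolding sc using lt0 c0 by simp
  have s1: "s \<le> 1" unfolding sc using c0 ceq assms(10,11) by (simp add: pos_divide_le_eq)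
  have cs: "c * s = lam * t" unfolding sc using c0 by simp
  have invTheta: "inv Theta U = lam *\<^sub>R Pi U" for U
  proof -
    have "inj Theta" unfolding assms(7) inj_def using lam bij_is_inj[OF bPhi] by (auto dest: injD)
    moreover have "Theta (lam *\<^sub>R Pi U) = U" unfolding assms(7) using lam
      by (simp add: linear_scale[OF lPhi] PhiPi)
    ultimately show ?thesis by (rule inv_f_eq)
  qed
  define B where "B = (\<lambda>x. x - s *\<^sub>R Psi x)"
  define A where "A = (\<lambda>x. x - t *\<^sub>R Upsilon x)"
  have Beq: "B x = (1 - s) *\<^sub>R x + s *\<^sub>R Pi x" for x
    unfolding B_def assms(8) Pi_def by (simp add: algebra_simps)
  have AB: "A x = c *\<^sub>R B x" for x
  proof -
    have "A x = (1 - t) *\<^sub>R x + (lam * t) *\<^sub>R Pi x"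
      unfolding A_def assms(9) invTheta by (simp add: algebra_simps)
    also have "\<dots> = c *\<^sub>R B x"
    proof -
      have "c *\<^sub>R B x = (c - c * s) *\<^sub>R x + (c * s) *\<^sub>R Pi x"
        unfolding Beq by (simp add: algebra_simps)
      moreover have "c - lam * t = 1 - t" using ceq by simp
      ultimately show ?thesis unfolding cs by simp
    qed
    finally show ?thesis .
  qed
  have lB: "linear B"
    by (rule linearI) (simp_all add: Beq linear_add[OF lPi] linear_scale[OF lPi] algebra_simps)
  have saB: "h0 (B U) V = h0 U (B V)" for U V
    by (simp add: Beq bilinear_ladd[OF h0b] bilinear_radd[OF h0b] bilinear_lmul[OF h0b]
        bilinear_rmul[OF h0b] saPi)
  have posB: "h0 (B U) U > 0" if "U \<noteq> 0" for U
  proof -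
    have "h0 (B U) U = (1 - s) * h0 U U + s * h0 (Pi U) U"
      by (simp add: Beq bilinear_ladd[OF h0b] bilinear_lmul[OF h0b])
    moreover have "h0 U U > 0" "h0 (Pi U) U > 0" using h0p that posPi by auto
    ultimately show ?thesis using s0 s1
      by (smt (verit) mult_nonneg_nonneg mult_pos_pos)
  qed
  have bB: "bij B" by (rule lin_pos_bij[OF lB h0b]) (use posB in blast)
  have BiB: "B (inv B U) = U" for U by (rule surj_f_inv_f[OF bij_is_surj[OF bB]])
  have lPb: "linear (inv B)" by (rule lin_inv[OF lB bB])
  have injA: "inj A" unfolding inj_def AB using c0 bij_is_inj[OF bB] by (auto dest: injD)
  have invA: "inv A = (\<lambda>y. inv B ((1 / c) *\<^sub>R y))"
  proof
    fix y show "inv A y = inv B ((1 / c) *\<^sub>R y)"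
      by (rule inv_f_eq[OF injA]) (use c0 in \<open>simp add: AB BiB\<close>)
  qed
  have bA: "bij A"
  proof -
    have "surj A" by (rule surjI[of A "\<lambda>y. inv B ((1 / c) *\<^sub>R y)"]) (use c0 in \<open>simp add: AB BiB\<close>)
    thus ?thesis using injA by (simp add: bij_def)
  qed
  define hs where "hs = metric_of h0 (inv B)"
  have hsb: "bilinear hs" unfolding hs_def metric_of_def bilinear_def
  proof (intro conjI allI)
    fix x show "linear (\<lambda>y. h0 (inv B x) y)" using h0b by (simp add: bilinear_def)
  next
    fix y show "linear (\<lambda>x. h0 (inv B x) y)"
      using linear_compose[OF lPb, of "\<lambda>x. h0 x y"] h0b by (simp add: bilinear_def o_def)
  qed
  have hsp: "\<forall>U. U \<noteq> 0 \<longrightarrow> hs U U > 0"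
  proof (intro allI impI)
    fix U :: 'v assume "U \<noteq> 0"
    have "inv B U \<noteq> 0"
    proof
      assume "inv B U = 0" hence "B (inv B U) = 0" using linear_0[OF lB] by simp
      thus False using \<open>U \<noteq> 0\<close> BiB by simp
    qed
    hence "h0 (B (inv B U)) (inv B U) > 0" using posB by blast
    hence "h0 (inv B U) (B (inv B U)) > 0" unfolding saB .
    thus "hs U U > 0" unfolding hs_def metric_of_def BiB .
  qed
  have mA: "metric_of (\<lambda>U V. lam * h0 U V) (inv A) = (\<lambda>U V. (lam / c) * hs U V)"
    unfolding hs_def metric_of_def invA
    by (intro ext) (simp add: linear_scale[OF lPb] bilinear_lmul[OF h0b])
  have L: "curv_fun br (\<lambda>U V. lam * h0 U V) Upsilon X Y t
      = sec_k br (\<lambda>U V. (lam / c) * hs U V) (c *\<^sub>R B X) (c *\<^sub>R B Y)"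
    unfolding curv_fun_def inv_lin_path_def A_def[symmetric] mA inv_inv_eq[OF bA] AB ..
  have R: "curv_fun br h0 Psi X Y s = sec_k br hs (B X) (B Y)"
    unfolding curv_fun_def inv_lin_path_def B_def[symmetric] hs_def inv_inv_eq[OF bB] ..
  have "curv_fun br (\<lambda>U V. lam * h0 U V) Upsilon X Y t = (lam / c) * c ^ 4 * sec_k br hs (B X) (B Y)"
    unfolding L by (rule sec_scale[OF bb hsb hsp]) (use c0 lam in simp)
  also have "\<dots> = lam * c ^ 3 * curv_fun br h0 Psi X Y s" unfolding R using c0
    by (simp add: power4_eq_xxxx power3_eq_cube)
  finally show ?thesis unfolding c_def s_def .
qed

end
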